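(* Let $\mu$ be critical, let $\xi_1,\dots,\xi_n$ be i.i.d. with law $\mu$, and let $\bar\xi_1,\bar\xi_2,\dots$ be i.i.d. with the size-biased law of $\xi_1$. Then for $1\le m<n$ and any non-negative measurable $f:\mathbb Z^m\to\mathbb R_+$, $$\mathbb E\big[f(\widehat D^n_1,\dots,\widehat D^n_m)\mathbf 1\{N_n\ge m\}\big]=\mathbb E\big[f(\bar\xi_1,\dots,\bar\xi_m)\,\Theta^n(\bar\xi_1,\dots,\bar\xi_m)\big],$$ where for $k_1,\dots,k_m\in\mathbb N$ with $k_1+\dots+k_m\le n-1$, $$\Theta^n(k_1,\dots,k_m)=\frac{\mathbb P\big(\sum_{i=m+1}^n\xi_i=n-1-\sum_{i=1}^mk_i\big)}{\mathbb P\big(\sum_{i=1}^n\xi_i=n-1\big)}\prod_{i=1}^m\frac{n-i+1}{n-1-\sum_{j=1}^{i-1}k_j},$$ and $\Theta^n(k_1,\dots,k_m)=0$ otherwise.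
   Context: $\mu$ is a law on $\mathbb Z_{\ge0}$ with support of gcd $1$; critical means mean $1$; the size-biased law is $\mathbb P(\bar\xi=k)=k\mu_k$. $D^n=(D^n_1,\dots,D^n_n)$ is a vector of i.i.d. $\mu$-distributed variables conditioned on $\sum_iD^n_i=n-1$, and $N_n=|\{i\in[n]:D^n_i>0\}|$. Size-biased random re-ordering of positive numbers $(k_1,\dots,k_N)$: the random permutation $\Sigma$ of $[N]$ with $\mathbb P(\Sigma=\sigma)=\prod_{i=1}^N k_{\sigma(i)}/\sum_{j=i}^Nk_{\sigma(j)}$, giving $(k_{\Sigma(1)},\dots,k_{\Sigma(N)})$. $\widehat D^n=(\widehat D^n_1,\dots,\widehat D^n_{N_n})$ is the size-biased random re-ordering of the positive entries of $D^n$. *)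

theory Defs
  imports "HOL-Probability.Probability" "HOL-Combinatorics.Permutations"
begin

definition critical :: "nat pmf \<Rightarrow> bool" where
  "critical \<mu> \<longleftrightarrow> (\<integral>\<^sup>+ k. ennreal (real k) \<partial>measure_pmf \<mu>) = 1"

definition aperiodic_support :: "nat pmf \<Rightarrow> bool" where
  "aperiodic_support \<mu> \<longleftrightarrow> Gcd (set_pmf \<mu>) = 1"

text \<open>Size-biased law: P(xi_bar = k) = k * mu_k (a probability law when mu is critical).\<close>
definition size_biased :: "nat pmf \<Rightarrow> nat pmf" where
  "size_biased \<mu> = embed_pmf (\<lambda>k. real k * pmf \<mu> k)"

text \<open>Law of (xi_i)_{i in I}, i.i.d. with law mu (0-indexed; value 0 outside I).\<close>
definition iid :: "nat set \<Rightarrow> nat pmf \<Rightarrow> (nat \<Rightarrow> nat) pmf" where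
  "iid I \<mu> = Pi_pmf I 0 (\<lambda>_. \<mu>)"

text \<open>Law of D^n = (D^n_1,...,D^n_n) (stored at indices 0..n-1): i.i.d. mu conditioned on sum = n-1.\<close>
definition Dn_law :: "nat pmf \<Rightarrow> nat \<Rightarrow> (nat \<Rightarrow> nat) pmf" where
  "Dn_law \<mu> n = cond_pmf (iid {..<n} \<mu>) {d. (\<Sum>i<n. d i) = n - 1}"

text \<open>The positive entries of (d_0,...,d_{n-1}) in index order; N_n is its length.\<close>
definition pos_entries :: "nat \<Rightarrow> (nat \<Rightarrow> nat) \<Rightarrow> nat list" where
  "pos_entries n d = filter (\<lambda>k. 0 < k) (map d [0..<n])"

text \<open>Size-biased random re-ordering of ks=(k_1..k_N) (0-indexed): probability that the
  random permutation Sigma of {0..<N} equals sigma.\<close>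
definition sb_perm_prob :: "nat list \<Rightarrow> (nat \<Rightarrow> nat) \<Rightarrow> real" where
  "sb_perm_prob ks \<sigma> =
     (\<Prod>i<length ks. real (ks ! \<sigma> i) / (\<Sum>j\<in>{i..<length ks}. real (ks ! \<sigma> j)))"

text \<open>Theta^n(k_1,...,k_m), with k_1..k_m stored as k 0, ..., k (m-1).\<close>
definition Theta :: "nat pmf \<Rightarrow> nat \<Rightarrow> nat \<Rightarrow> (nat \<Rightarrow> nat) \<Rightarrow> real" where
  "Theta \<mu> n m k =
    (if (\<Sum>i<m. k i) \<le> n - 1 then
       measure_pmf.prob (iid {m..<n} \<mu>) {x. (\<Sum>i\<in>{m..<n}. x i) = n - 1 - (\<Sum>i<m. k i)}
       / measure_pmf.prob (iid {..<n} \<mu>) {x. (\<Sum>i<n. x i) = n - 1}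
       * (\<Prod>i<m. real (n - i) / real (n - 1 - (\<Sum>j<i. k j)))
     else 0)"

end

theory Submission
  imports Defs "HOL-Combinatorics.Multiset_Permutations"
begin


fun sbl :: "(nat \<Rightarrow> nat) \<Rightarrow> nat list \<Rightarrow> real" where
  "sbl w [] = 1"
| "sbl w (x # xs) = real (w x) / (real (w x) + (\<Sum>y\<leftarrow>xs. real (w y))) * sbl w xs"

fun Wl :: "(nat \<Rightarrow> nat) \<Rightarrow> nat \<Rightarrow> nat list \<Rightarrow> real" where
  "Wl w S [] = 1"
| "Wl w S (x # xs) = real (w x) / real S * Wl w (S - w x) xs"

definition dl :: "nat \<Rightarrow> nat set \<Rightarrow> nat list set" where
  "dl m R = {xs. length xs = m \<and> distinct xs \<and> set xs \<subseteq> R}"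

lemma dl_0: "dl 0 R = {[]}" by (auto simp: dl_def)

lemma dl_Suc: "dl (Suc m) R = (\<Union>x\<in>R. (\<lambda>xs. x # xs) ` dl m (R - {x}))"
  apply (auto simp: dl_def length_Suc_conv image_iff)
  done

lemma finite_dl: "finite R \<Longrightarrow> finite (dl m R)"
  unfolding dl_def by (rule finite_subset[OF _ finite_lists_length_eq[of R m]]) auto

lemma sum_list_perm: "xs \<in> permutations_of_set R \<Longrightarrow> (\<Sum>y\<leftarrow>xs. real (w y)) = real (\<Sum>y\<in>R. w y)"
  by (auto simp: permutations_of_set_def sum_list_distinct_conv_sum_set)

lemma sbl_sum1:
  assumes "finite R" "\<And>x. x \<in> R \<Longrightarrow> w x > 0"
  shows "(\<Sum>xs\<in>permutations_of_set R. sbl w xs) = 1"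
  using assms
proof (induction "card R" arbitrary: R)
  case 0
  then show ?case by simp
next
  case (Suc c)
  then have ne: "R \<noteq> {}" by auto
  have pos: "(\<Sum>y\<in>R. w y) > 0" using Suc ne
    by (metis all_not_in_conv sum_pos)
  have "(\<Sum>xs\<in>permutations_of_set R. sbl w xs)
      = (\<Sum>x\<in>R. \<Sum>xs\<in>permutations_of_set (R - {x}). sbl w (x # xs))"
    apply (subst permutations_of_set_nonempty[OF ne])
    apply (subst sum.UNION_disjoint)
    using Suc apply (auto simp: sum.reindex)
    done
  also have "\<dots> = (\<Sum>x\<in>R. real (w x) / real (\<Sum>y\<in>R. w y))"
  proof (rule sum.cong[OF refl])
    fix x assume x: "x \<in> R"
    have e: "real (w x) + (\<Sum>y\<in>R - {x}. real (w y)) = (\<Sum>y\<in>R. real (w y))"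
      using x Suc by (simp add: sum.remove)
    have "(\<Sum>xs\<in>permutations_of_set (R - {x}). sbl w (x # xs))
       = (\<Sum>xs\<in>permutations_of_set (R - {x}). real (w x) / real (\<Sum>y\<in>R. w y) * sbl w xs)"
      by (rule sum.cong[OF refl]) (simp add: sum_list_perm e)
    also have "\<dots> = real (w x) / real (\<Sum>y\<in>R. w y) * (\<Sum>xs\<in>permutations_of_set (R - {x}). sbl w xs)"
      by (simp add: sum_distrib_left)
    also have "(\<Sum>xs\<in>permutations_of_set (R - {x}). sbl w xs) = 1"
      using Suc.hyps(1)[of "R - {x}"] Suc.hyps(2) Suc.prems x
      by (simp add: card_Diff_singleton)
    finally show "(\<Sum>xs\<in>permutations_of_set (R - {x}). sbl w (x # xs)) = real (w x) / real (\<Sum>y\<in>R. w y)" by simp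
  qed
  also have "\<dots> = 1" using pos by (simp add: sum_divide_distrib[symmetric] of_nat_sum[symmetric] del: of_nat_sum)
  finally show ?case .
qed


lemma sum_perm_split:
  assumes ne: "R \<noteq> {}" and fin: "finite R"
  shows "(\<Sum>xs\<in>permutations_of_set R. F xs)
      = (\<Sum>x\<in>R. \<Sum>xs\<in>permutations_of_set (R - {x}). F (x # xs))"
  apply (subst permutations_of_set_nonempty[OF ne])
  apply (subst sum.UNION_disjoint)
  using fin apply (auto simp: sum.reindex)
  done

lemma sum_dl_split:
  assumes fin: "finite R"
  shows "(\<Sum>xs\<in>dl (Suc m) R. F xs)
      = (\<Sum>x\<in>R. \<Sum>xs\<in>dl m (R - {x}). F (x # xs))"
  apply (subst dl_Suc)
  apply (subst sum.UNION_disjoint)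
  using fin apply (auto simp: sum.reindex finite_dl)
  done

lemma sbl_take:
  assumes "finite R" "\<And>x. x \<in> R \<Longrightarrow> w x > 0" "m \<le> card R"
  shows "(\<Sum>xs\<in>permutations_of_set R. sbl w xs * g (take m xs))
       = (\<Sum>js\<in>dl m R. Wl w (\<Sum>y\<in>R. w y) js * g js)"
  using assms
proof (induction m arbitrary: R g)
  case 0
  then show ?case using sbl_sum1[of R w] by (simp add: dl_0 sum_distrib_right[symmetric])
next
  case (Suc m)
  then have ne: "R \<noteq> {}" by auto
  have "(\<Sum>xs\<in>permutations_of_set R. sbl w xs * g (take (Suc m) xs))
      = (\<Sum>x\<in>R. \<Sum>xs\<in>permutations_of_set (R - {x}). sbl w (x # xs) * g (x # take m xs))"
    by (subst sum_perm_split[OF ne Suc.prems(1)]) simp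
  also have "\<dots> = (\<Sum>x\<in>R. \<Sum>js\<in>dl m (R - {x}). Wl w (\<Sum>y\<in>R. w y) (x # js) * g (x # js))"
  proof (rule sum.cong[OF refl])
    fix x assume x: "x \<in> R"
    have e: "real (w x) + (\<Sum>y\<in>R - {x}. real (w y)) = (\<Sum>y\<in>R. real (w y))"
      using x Suc by (simp add: sum.remove)
    have e2: "(\<Sum>y\<in>R. w y) - w x = (\<Sum>y\<in>R - {x}. w y)"
      using x Suc by (simp add: sum.remove)
    have "(\<Sum>xs\<in>permutations_of_set (R - {x}). sbl w (x # xs) * g (x # take m xs))
       = real (w x) / real (\<Sum>y\<in>R. w y) * (\<Sum>xs\<in>permutations_of_set (R - {x}). sbl w xs * g (x # take m xs))"
      by (simp add: sum_distrib_left sum_list_perm e mult.assoc cong: sum.cong)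
    also have "\<dots> = real (w x) / real (\<Sum>y\<in>R. w y) * (\<Sum>js\<in>dl m (R - {x}). Wl w (\<Sum>y\<in>R - {x}. w y) js * g (x # js))"
      using Suc.IH[of "R - {x}" "\<lambda>js. g (x # js)"] Suc.prems x
      by (simp add: card_Diff_singleton)
    also have "\<dots> = (\<Sum>js\<in>dl m (R - {x}). Wl w (\<Sum>y\<in>R. w y) (x # js) * g (x # js))"
      by (simp add: sum_distrib_left e2 mult.assoc)
    finally show "(\<Sum>xs\<in>permutations_of_set (R - {x}). sbl w (x # xs) * g (x # take m xs))
       = (\<Sum>js\<in>dl m (R - {x}). Wl w (\<Sum>y\<in>R. w y) (x # js) * g (x # js))" .
  qed
  also have "\<dots> = (\<Sum>js\<in>dl (Suc m) R. Wl w (\<Sum>y\<in>R. w y) js * g js)"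
    by (rule sum_dl_split[OF Suc.prems(1), symmetric])
  finally show ?case .
qed

lemma sbl_prod: "sbl w xs = (\<Prod>i<length xs. real (w (xs ! i)) / (\<Sum>j\<in>{i..<length xs}. real (w (xs ! j))))"
proof (induction xs)
  case Nil
  then show ?case by simp
next
  case (Cons x xs)
  have s1: "(\<Sum>j\<in>{0..<Suc (length xs)}. real (w ((x # xs) ! j))) = real (w x) + (\<Sum>y\<leftarrow>xs. real (w y))"
    by (subst sum.atLeast0_lessThan_Suc_shift) (simp add: sum_list_sum_nth atLeast0LessThan)
  have s2: "(\<Sum>j\<in>{Suc i..<Suc (length xs)}. real (w ((x # xs) ! j))) = (\<Sum>j\<in>{i..<length xs}. real (w (xs ! j)))" for i
    by (simp only: sum.shift_bounds_Suc_ivl) simp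
  show ?case
    unfolding length_Cons prod.lessThan_Suc_shift s1 s2 nth_Cons_0 nth_Cons_Suc sbl.simps Cons.IH
    by simp
qed

lemma map_permutes_bij:
  "bij_betw (\<lambda>\<sigma>. map \<sigma> [0..<N]) {\<sigma>. \<sigma> permutes {..<N}} (permutations_of_set {..<N})"
proof (rule bij_betwI')
  fix \<sigma> \<tau> assume s: "\<sigma> \<in> {\<sigma>. \<sigma> permutes {..<N}}" and t: "\<tau> \<in> {\<sigma>. \<sigma> permutes {..<N}}"
  show "(map \<sigma> [0..<N] = map \<tau> [0..<N]) = (\<sigma> = \<tau>)"
  proof
    assume e: "map \<sigma> [0..<N] = map \<tau> [0..<N]"
    show "\<sigma> = \<tau>"
    proof
      fix x show "\<sigma> x = \<tau> x"
      proof (cases "x < N")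
        case True
        then show ?thesis using arg_cong[OF e, of "\<lambda>l. l ! x"] by simp
      next
        case False
        then show ?thesis using s t by (simp add: permutes_not_in)
      qed
    qed
  qed simp
next
  fix \<sigma> assume s: "\<sigma> \<in> {\<sigma>. \<sigma> permutes {..<N}}"
  then have "\<sigma> ` {..<N} = {..<N}" "inj_on \<sigma> {..<N}"
    by (auto simp: permutes_image permutes_inj_on)
  then show "map \<sigma> [0..<N] \<in> permutations_of_set {..<N}"
    by (auto simp: permutations_of_set_def distinct_map atLeast0LessThan)
next
  fix xs assume xs: "xs \<in> permutations_of_set {..<N}"
  then have d: "distinct xs" and st: "set xs = {..<N}" by (auto simp: permutations_of_set_def)
  then have len: "length xs = N" using distinct_card by fastforce
  define \<sigma> where "\<sigma> = (\<lambda>i. if i < N then xs ! i else i)"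
  have "bij_betw ((!) xs) {..<N} {..<N}" using bij_betw_nth[OF d] len st by simp
  then have "bij_betw \<sigma> {..<N} {..<N}" by (rule bij_betw_cong[THEN iffD1, rotated]) (simp add: \<sigma>_def)
  then have "\<sigma> permutes {..<N}" by (rule bij_imp_permutes) (simp add: \<sigma>_def)
  moreover have "xs = map \<sigma> [0..<N]"
    by (rule nth_equalityI) (auto simp: len \<sigma>_def)
  ultimately show "\<exists>\<sigma>\<in>{\<sigma>. \<sigma> permutes {..<N}}. xs = map \<sigma> [0..<N]" by blast
qed

lemma Wl_prod: "Wl w S js = (\<Prod>i<length js. real (w (js ! i)) / real (S - (\<Sum>l<i. w (js ! l))))"
proof (induction js arbitrary: S)
  case Nil
  then show ?case by simp
next
  case (Cons x xs)
  have sh: "(\<Sum>l<Suc i. w ((x#xs) ! l)) = w x + (\<Sum>l<i. w (xs ! l))" for i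
    by (simp only: sum.lessThan_Suc_shift) simp
  show ?case
    apply (simp only: length_Cons prod.lessThan_Suc_shift)
    apply (simp add: Cons.IH sh diff_diff_left del: of_nat_diff sum.lessThan_Suc)
    done
qed

lemma Wl_zero: "x \<in> set js \<Longrightarrow> w x = 0 \<Longrightarrow> Wl w S js = 0"
  by (induction js arbitrary: S) auto

lemma Wl_map: "(\<And>j. j \<in> set js \<Longrightarrow> w j = v (p j)) \<Longrightarrow> Wl w S js = Wl v S (map p js)"
  by (induction js arbitrary: S) auto

lemma dl_image: "inj_on f A \<Longrightarrow> dl m (f ` A) = map f ` dl m A"
  unfolding dl_def
  apply (auto simp: image_iff distinct_map)
  subgoal for xs
  proof -
    assume a: "inj_on f A" "distinct xs" "set xs \<subseteq> f ` A"
    have h: "x \<in> set xs \<Longrightarrow> f (the_inv_into A f x) = x" for x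
      using a by (auto simp: f_the_inv_into_f)
    have 1: "xs = map f (map (the_inv_into A f) xs)"
      by (simp add: h map_idI)
    have 2: "set (map (the_inv_into A f) xs) \<subseteq> A"
      using a by (auto intro: the_inv_into_into)
    have 3: "distinct (map (the_inv_into A f) xs)"
      using a by (auto simp: distinct_map intro!: inj_on_subset[OF inj_on_the_inv_into])
    show ?thesis using 1 2 3 by (metis length_map)
  qed
  by (auto simp: distinct_map intro: inj_on_subset)

lemma inj_map_dl: "inj_on f A \<Longrightarrow> inj_on (map f) (dl m A)"
  by (rule inj_on_subset[OF inj_on_map_lists]) (auto simp: dl_def)

lemma dl_empty: "card R < m \<Longrightarrow> finite R \<Longrightarrow> dl m R = {}"
proof (rule ccontr)
  assume a: "card R < m" "finite R" "dl m R \<noteq> {}"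
  then obtain xs where "length xs = m" "distinct xs" "set xs \<subseteq> R" by (auto simp: dl_def)
  then have "m \<le> card R" using card_mono[OF a(2)] distinct_card by metis
  then show False using a by simp
qed

lemma integrand_eq:
  "(\<Sum>\<sigma>\<in>{\<sigma>. \<sigma> permutes {..<length (pos_entries n d)}}.
       sb_perm_prob (pos_entries n d) \<sigma>
         * (if m \<le> length (pos_entries n d)
            then f (map (\<lambda>i. int (pos_entries n d ! \<sigma> i)) [0..<m]) else 0))
   = (\<Sum>ix\<in>dl m {..<n}. Wl d (\<Sum>i<n. d i) ix * f (map (\<lambda>i. int (d i)) ix))"
proof -
  define ks where "ks = pos_entries n d"
  define N where "N = length ks"
  define ps where "ps = filter (\<lambda>i. 0 < d i) [0..<n]"
  have ks_ps: "ks = map d ps"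
    by (simp add: ks_def ps_def pos_entries_def filter_map comp_def)
  have N_ps: "N = length ps" by (simp add: N_def ks_ps)
  have ksnth: "j < N \<Longrightarrow> ks ! j = d (ps ! j)" for j by (simp add: ks_ps N_ps)
  have kspos: "j < N \<Longrightarrow> 0 < ks ! j" for j
    using nth_mem[of j ps] by (auto simp: ksnth N_ps ps_def)
  define G where "G = (\<lambda>js. if m \<le> N then f (map (\<lambda>j. int (ks ! j)) js) else 0)"
  define S where "S = (\<Sum>y\<in>{..<N}. ks ! y)"
  have "(\<Sum>\<sigma>\<in>{\<sigma>. \<sigma> permutes {..<N}}.
       sb_perm_prob ks \<sigma> * (if m \<le> N then f (map (\<lambda>i. int (ks ! \<sigma> i)) [0..<m]) else 0))
      = (\<Sum>\<sigma>\<in>{\<sigma>. \<sigma> permutes {..<N}}. sbl ((!) ks) (map \<sigma> [0..<N]) * G (take m (map \<sigma> [0..<N])))"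
  proof (rule sum.cong[OF refl])
    fix \<sigma>
    have 1: "sb_perm_prob ks \<sigma> = sbl ((!) ks) (map \<sigma> [0..<N])"
      by (simp add: sbl_prod sb_perm_prob_def N_def)
    have 2: "m \<le> N \<Longrightarrow> take m (map \<sigma> [0..<N]) = map \<sigma> [0..<m]"
      by (simp add: take_map min_def)
    show "sb_perm_prob ks \<sigma> * (if m \<le> N then f (map (\<lambda>i. int (ks ! \<sigma> i)) [0..<m]) else 0)
        = sbl ((!) ks) (map \<sigma> [0..<N]) * G (take m (map \<sigma> [0..<N]))"
      using 1 2 by (simp add: G_def comp_def)
  qed
  also have "\<dots> = (\<Sum>xs\<in>permutations_of_set {..<N}. sbl ((!) ks) xs * G (take m xs))"
    by (rule sum.reindex_bij_betw[OF map_permutes_bij])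
  also have "\<dots> = (\<Sum>js\<in>dl m {..<N}. Wl ((!) ks) S js * f (map (\<lambda>j. int (ks ! j)) js))"
  proof (cases "m \<le> N")
    case True
    then show ?thesis
      using sbl_take[of "{..<N}" "(!) ks" m G] kspos unfolding G_def S_def
      by (simp only: finite_lessThan card_lessThan lessThan_iff if_True)
  next
    case False
    then show ?thesis by (simp add: G_def dl_empty)
  qed
  also have "S = (\<Sum>i<n. d i)"
  proof -
    have "S = sum_list ks" by (simp add: S_def N_def sum_list_sum_nth atLeast0LessThan)
    also have "\<dots> = sum_list (map d [0..<n])"
      unfolding ks_ps ps_def by (rule sum_list_map_filter) auto
    also have "\<dots> = (\<Sum>i<n. d i)"
      by (simp add: sum_list_distinct_conv_sum_set atLeast0LessThan)
    finally show ?thesis .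
  qed
  also have "(\<Sum>js\<in>dl m {..<N}. Wl ((!) ks) (\<Sum>i<n. d i) js * f (map (\<lambda>j. int (ks ! j)) js))
      = (\<Sum>js\<in>dl m {..<N}. Wl d (\<Sum>i<n. d i) (map ((!) ps) js) * f (map (\<lambda>i. int (d i)) (map ((!) ps) js)))"
  proof (rule sum.cong[OF refl])
    fix js assume js: "js \<in> dl m {..<N}"
    then have lt: "j \<in> set js \<Longrightarrow> j < N" for j by (auto simp: dl_def)
    have "Wl ((!) ks) (\<Sum>i<n. d i) js = Wl d (\<Sum>i<n. d i) (map ((!) ps) js)"
      by (rule Wl_map) (simp add: ksnth lt)
    moreover have "map (\<lambda>j. int (ks ! j)) js = map (\<lambda>i. int (d i)) (map ((!) ps) js)"
      unfolding map_map comp_def by (rule map_cong[OF refl]) (simp add: ksnth lt)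
    ultimately show "Wl ((!) ks) (\<Sum>i<n. d i) js * f (map (\<lambda>j. int (ks ! j)) js)
      = Wl d (\<Sum>i<n. d i) (map ((!) ps) js) * f (map (\<lambda>i. int (d i)) (map ((!) ps) js))" by (simp only:)
  qed
  also have "\<dots> = (\<Sum>ix\<in>dl m (set ps). Wl d (\<Sum>i<n. d i) ix * f (map (\<lambda>i. int (d i)) ix))"
  proof -
    have dps: "distinct ps" by (simp add: ps_def)
    have bij: "bij_betw ((!) ps) {..<N} (set ps)" using bij_betw_nth[OF dps] N_ps by simp
    then have inj: "inj_on ((!) ps) {..<N}" and im: "(!) ps ` {..<N} = set ps"
      by (auto simp: bij_betw_def)
    show ?thesis
      apply (subst im[symmetric])
      apply (subst dl_image[OF inj])
      apply (subst sum.reindex[OF inj_map_dl[OF inj]])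
      apply (simp add: comp_def)
      done
  qed
  also have "\<dots> = (\<Sum>ix\<in>dl m {..<n}. Wl d (\<Sum>i<n. d i) ix * f (map (\<lambda>i. int (d i)) ix))"
  proof (rule sum.mono_neutral_left)
    show "finite (dl m {..<n})" by (simp add: finite_dl)
    show "dl m (set ps) \<subseteq> dl m {..<n}" by (auto simp: dl_def ps_def)
    show "\<forall>ix\<in>dl m {..<n} - dl m (set ps). Wl d (\<Sum>i<n. d i) ix * f (map (\<lambda>i. int (d i)) ix) = 0"
    proof
      fix ix assume "ix \<in> dl m {..<n} - dl m (set ps)"
      then obtain x where "x \<in> set ix" "x < n" "x \<notin> set ps" by (auto simp: dl_def)
      then have "d x = 0" by (auto simp: ps_def)
      then show "Wl d (\<Sum>i<n. d i) ix * f (map (\<lambda>i. int (d i)) ix) = 0"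
        using Wl_zero \<open>x \<in> set ix\<close> by simp
    qed
  qed
  finally show ?thesis by (simp only: ks_def N_def)
qed



lemma sum_lessThan_split: "(m::nat) \<le> n \<Longrightarrow> (\<Sum>i<n. g i) = (\<Sum>i<m. g i) + (\<Sum>i\<in>{m..<n}. (g i :: 'a::comm_monoid_add))"
  using sum.atLeastLessThan_concat[of 0 m n g] by (simp add: atLeast0LessThan)

lemma perm_extend:
  assumes ix: "ix \<in> dl m {..<n}"
  obtains h where "bij_betw h {..<n} {..<n}" "\<And>i. i < m \<Longrightarrow> h i = ix ! i" "\<And>x. x \<notin> {..<n} \<Longrightarrow> h x = x"
proof -
  from ix have len: "length ix = m" and dix: "distinct ix" and six: "set ix \<subseteq> {..<n}" by (auto simp: dl_def)
  have "card (set ix) \<le> card {..<n}" using six by (intro card_mono) auto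
  then have mn: "m \<le> n" using distinct_card[OF dix] len by simp
  define T where "T = {..<n} - set ix"
  have fT: "finite T" by (simp add: T_def)
  have "card T = card {..<n} - card (set ix)" unfolding T_def using six
    by (intro card_Diff_subset) auto
  then have cT: "card {m..<n} = card T" using distinct_card[OF dix] len by simp
  obtain \<beta> where b: "bij_betw \<beta> {m..<n} T"
    using finite_same_card_bij[OF finite_atLeastLessThan fT cT] by blast
  define h where "h = (\<lambda>i. if i < m then ix ! i else if i < n then \<beta> i else i)"
  have "bij_betw ((!) ix) {..<m} (set ix)" by (rule bij_betw_nth[OF dix]) (simp_all add: len)
  moreover have "bij_betw h {..<m} (set ix) = bij_betw ((!) ix) {..<m} (set ix)"
    by (rule bij_betw_cong) (simp add: h_def)
  ultimately have b1: "bij_betw h {..<m} (set ix)" by simp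
  have "bij_betw h {m..<n} T = bij_betw \<beta> {m..<n} T"
    by (rule bij_betw_cong) (simp add: h_def)
  with b have b2: "bij_betw h {m..<n} T" by simp
  have "bij_betw h ({..<m} \<union> {m..<n}) (set ix \<union> T)"
    by (rule bij_betw_combine[OF b1 b2]) (auto simp: T_def)
  moreover have "{..<m} \<union> {m..<n} = {..<n}" using mn by auto
  moreover have "set ix \<union> T = {..<n}" using six by (auto simp: T_def)
  ultimately have "bij_betw h {..<n} {..<n}" by simp
  moreover have "\<And>i. i < m \<Longrightarrow> h i = ix ! i" by (simp add: h_def)
  moreover have "\<And>x. x \<notin> {..<n} \<Longrightarrow> h x = x" using mn by (auto simp: h_def)
  ultimately show ?thesis by (rule that)
qed

lemma prob_pair_product:
  "measure_pmf.prob (pair_pmf M N) (A \<times> B) = measure_pmf.prob M A * measure_pmf.prob N B"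
proof -
  have "measure_pmf.prob (pair_pmf M N) (A \<times> B) = measure_pmf.prob (pair_pmf M N) ((A \<times> B) \<inter> set_pmf (pair_pmf M N))"
    by (rule measure_Int_set_pmf[symmetric])
  also have "(A \<times> B) \<inter> set_pmf (pair_pmf M N) = (A \<inter> set_pmf M) \<times> (B \<inter> set_pmf N)" by auto
  also have "measure_pmf.prob (pair_pmf M N) \<dots> = measure_pmf.prob M (A \<inter> set_pmf M) * measure_pmf.prob N (B \<inter> set_pmf N)"
    by (rule measure_pmf_prob_product) (auto intro: countable_Int2)
  also have "\<dots> = measure_pmf.prob M A * measure_pmf.prob N B" by (simp add: measure_Int_set_pmf)
  finally show ?thesis .
qed

lemma prob_event:
  assumes ix: "ix \<in> dl m {..<n}"
  shows "measure_pmf.prob (iid {..<n} \<mu>) {d. (\<forall>i<m. d (ix ! i) = k i) \<and> (\<Sum>i<n. d i) = n - 1}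
    = (if (\<Sum>i<m. k i) \<le> n - 1 then (\<Prod>i<m. pmf \<mu> (k i)) *
         measure_pmf.prob (iid {m..<n} \<mu>) {x. (\<Sum>i\<in>{m..<n}. x i) = n - 1 - (\<Sum>i<m. k i)} else 0)"
proof -
  from ix have len: "length ix = m" and dix: "distinct ix" and six: "set ix \<subseteq> {..<n}" by (auto simp: dl_def)
  have "card (set ix) \<le> card {..<n}" using six by (intro card_mono) auto
  then have mn: "m \<le> n" using distinct_card[OF dix] len by simp
  obtain h where hb: "bij_betw h {..<n} {..<n}" and hi: "\<And>i. i < m \<Longrightarrow> h i = ix ! i"
     and ho: "\<And>x. x \<notin> {..<n} \<Longrightarrow> h x = x"
    using perm_extend[OF ix] by blast
  define P where "P = iid {..<n} \<mu>"
  define E' where "E' = {e. (\<forall>i<m. e i = k i) \<and> (\<Sum>i<n. e i) = n - 1}"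
  have eq: "P = map_pmf (\<lambda>g. g \<circ> h) P"
    unfolding P_def iid_def by (rule Pi_pmf_bij_betw[OF _ hb]) (use ho in auto)
  have "measure_pmf.prob P E' = measure_pmf.prob (map_pmf (\<lambda>g. g \<circ> h) P) E'"
    by (simp only: eq[symmetric])
  also have "\<dots> = measure_pmf.prob P ((\<lambda>g. g \<circ> h) -` E')"
    by (rule measure_map_pmf)
  also have "(\<lambda>g. g \<circ> h) -` E' = {d. (\<forall>i<m. d (ix ! i) = k i) \<and> (\<Sum>i<n. d i) = n - 1}"
  proof -
    have "(\<Sum>i<n. g (h i)) = (\<Sum>i<n. g i)" for g :: "nat \<Rightarrow> nat"
      by (rule sum.reindex_bij_betw[OF hb])
    then show ?thesis by (auto simp: E'_def hi)
  qed
  finally have 1: "measure_pmf.prob P {d. (\<forall>i<m. d (ix ! i) = k i) \<and> (\<Sum>i<n. d i) = n - 1} = measure_pmf.prob P E'" ..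
  show ?thesis
  proof (cases "(\<Sum>i<m. k i) \<le> n - 1")
    case False
    have "E' = {}"
    proof (rule ccontr)
      assume "E' \<noteq> {}"
      then obtain e where e: "\<forall>i<m. e i = k i" "(\<Sum>i<n. e i) = n - 1" by (auto simp: E'_def)
      have "(\<Sum>i<m. e i) = (\<Sum>i<m. k i)" using e(1) by simp
      moreover have "(\<Sum>i<n. e i) = (\<Sum>i<m. e i) + (\<Sum>i\<in>{m..<n}. e i)" by (rule sum_lessThan_split[OF mn])
      ultimately show False using e(2) False by linarith
    qed
    then show ?thesis using 1 False by (simp add: P_def)
  next
    case True
    define P1 where "P1 = Pi_pmf {..<m} 0 (\<lambda>_. \<mu>)"
    define P2 where "P2 = Pi_pmf {m..<n} 0 (\<lambda>_. \<mu>)"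
    define mg where "mg = (\<lambda>(f::nat\<Rightarrow>nat,g::nat\<Rightarrow>nat) x. if x \<in> {..<m} then f x else g x)"
    have un: "{..<m} \<union> {m..<n} = {..<n}" by (rule ivl_disj_un_one(2)[OF mn])
    have "P = map_pmf mg (pair_pmf P1 P2)"
      unfolding P_def iid_def P1_def P2_def mg_def un[symmetric]
      by (rule Pi_pmf_union) auto
    then have "measure_pmf.prob P E' = measure_pmf.prob (pair_pmf P1 P2) (mg -` E')"
      by simp
    also have "mg -` E' = {f. \<forall>i<m. f i = k i} \<times> {g. (\<Sum>i\<in>{m..<n}. g i) = n - 1 - (\<Sum>i<m. k i)}"
    proof (rule set_eqI, clarify)
      fix f g :: "nat \<Rightarrow> nat"
      have s: "(\<Sum>i<n. mg (f, g) i) = (\<Sum>i<m. f i) + (\<Sum>i\<in>{m..<n}. g i)"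
        by (subst sum_lessThan_split[OF mn]) (simp add: mg_def)
      have a: "(\<forall>i<m. mg (f, g) i = k i) = (\<forall>i<m. f i = k i)" by (simp add: mg_def)
      show "((f, g) \<in> mg -` E') = ((f, g) \<in> {f. \<forall>i<m. f i = k i} \<times> {g. (\<Sum>i\<in>{m..<n}. g i) = n - 1 - (\<Sum>i<m. k i)})"
      proof (cases "\<forall>i<m. f i = k i")
        case True
        then have "(\<Sum>i<m. f i) = (\<Sum>i<m. k i)" by simp
        then show ?thesis using True \<open>(\<Sum>i<m. k i) \<le> n - 1\<close> by (auto simp: E'_def a s)
      next
        case False
        then show ?thesis by (auto simp: E'_def a)
      qed
    qed
    also have "measure_pmf.prob (pair_pmf P1 P2) \<dots> = measure_pmf.prob P1 {f. \<forall>i<m. f i = k i} *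
        measure_pmf.prob P2 {g. (\<Sum>i\<in>{m..<n}. g i) = n - 1 - (\<Sum>i<m. k i)}"
      by (rule prob_pair_product)
    also have "measure_pmf.prob P1 {f. \<forall>i<m. f i = k i} = (\<Prod>i<m. pmf \<mu> (k i))"
    proof -
      have "{f. \<forall>i<m. f i = k i} = Pi {..<m} (\<lambda>i. {k i})" by (auto simp: Pi_def)
      then show ?thesis unfolding P1_def by (simp add: measure_Pi_pmf_Pi measure_pmf_single)
    qed
    finally show ?thesis using 1 True by (simp add: P_def P2_def iid_def)
  qed
qed



definition DSet :: "nat \<Rightarrow> (nat \<Rightarrow> nat) set" where
  "DSet n = PiE_dflt {..<n} 0 (\<lambda>_. {..n-1}) \<inter> {x. (\<Sum>i<n. x i) = n - 1}"

definition KSet :: "nat \<Rightarrow> nat \<Rightarrow> (nat \<Rightarrow> nat) set" where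
  "KSet n m = PiE_dflt {..<m} 0 (\<lambda>_. {..n-1})"

definition Phi :: "nat \<Rightarrow> nat \<Rightarrow> (nat \<Rightarrow> nat) \<Rightarrow> real" where
  "Phi n m k = (\<Prod>i<m. real (k i) / real (n - 1 - (\<Sum>j<i. k j)))"

definition kd :: "nat \<Rightarrow> nat list \<Rightarrow> (nat \<Rightarrow> nat) \<Rightarrow> nat \<Rightarrow> nat" where
  "kd m ix d = (\<lambda>i. if i < m then d (ix ! i) else 0)"

definition fk :: "nat \<Rightarrow> (nat \<Rightarrow> nat) \<Rightarrow> int list" where
  "fk m k = map (\<lambda>i. int (k i)) [0..<m]"

lemma finite_DSet: "finite (DSet n)"
  unfolding DSet_def by (rule finite_Int) (auto intro!: finite_PiE_dflt)

lemma finite_KSet: "finite (KSet n m)"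
  unfolding KSet_def by (auto intro!: finite_PiE_dflt)

lemma le_sum_nat: "(i::nat) < n \<Longrightarrow> (d i :: nat) \<le> (\<Sum>j<n. d j)"
  by (rule member_le_sum) auto

lemma kd_in_KSet:
  assumes "d \<in> DSet n" "ix \<in> dl m {..<n}"
  shows "kd m ix d \<in> KSet n m"
proof -
  have "d (ix ! i) \<le> n - 1" if "i < m" for i
  proof -
    have "ix ! i \<in> set ix" using assms(2) that by (auto simp: dl_def)
    then have "ix ! i < n" using assms(2) by (auto simp: dl_def)
    then show ?thesis using assms(1) by (auto simp: DSet_def PiE_dflt_def)
  qed
  then show ?thesis by (auto simp: KSet_def PiE_dflt_def kd_def)
qed

lemma Wl_kd:
  assumes "ix \<in> dl m {..<n}"
  shows "Wl d (n - 1) ix * f (map (\<lambda>i. int (d i)) ix) = Phi n m (kd m ix d) * f (fk m (kd m ix d))"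
proof -
  have len: "length ix = m" using assms by (auto simp: dl_def)
  have "Wl d (n - 1) ix = Phi n m (kd m ix d)"
    unfolding Wl_prod Phi_def len
  proof (rule prod.cong[OF refl])
    fix i assume i: "i \<in> {..<m}"
    have "(\<Sum>l<i. d (ix ! l)) = (\<Sum>j<i. kd m ix d j)"
      by (rule sum.cong[OF refl]) (use i in \<open>auto simp: kd_def\<close>)
    then show "real (d (ix ! i)) / real (n - 1 - (\<Sum>l<i. d (ix ! l))) =
          real (kd m ix d i) / real (n - 1 - (\<Sum>j<i. kd m ix d j))"
      using i by (simp add: kd_def)
  qed
  moreover have "map (\<lambda>i. int (d i)) ix = fk m (kd m ix d)"
    by (rule nth_equalityI) (auto simp: fk_def kd_def len)
  ultimately show ?thesis by simp
qed

lemma card_dl: "finite R \<Longrightarrow> card (dl m R) = (\<Prod>i<m. card R - i)"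
proof (induction m arbitrary: R)
  case 0
  then show ?case by (simp add: dl_0)
next
  case (Suc m)
  have "card (dl (Suc m) R) = (\<Sum>xs\<in>dl (Suc m) R. 1)" by simp
  also have "\<dots> = (\<Sum>x\<in>R. \<Sum>xs\<in>dl m (R - {x}). 1)" by (rule sum_dl_split[OF Suc.prems])
  also have "\<dots> = (\<Sum>x\<in>R. \<Prod>i<m. card R - Suc i)"
  proof (rule sum.cong[OF refl])
    fix x assume "x \<in> R"
    then have "card (R - {x}) = card R - 1" using Suc.prems by simp
    then show "(\<Sum>xs\<in>dl m (R - {x}). 1) = (\<Prod>i<m. card R - Suc i)"
      using Suc.IH[of "R - {x}"] Suc.prems by simp
  qed
  also have "\<dots> = (\<Prod>i<Suc m. card R - i)"
    unfolding prod.lessThan_Suc_shift by simp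
  finally show ?case .
qed

definition Lr :: "nat \<Rightarrow> nat \<Rightarrow> (int list \<Rightarrow> real) \<Rightarrow> (nat \<Rightarrow> nat) \<Rightarrow> real" where
  "Lr n m f d = (\<Sum>\<sigma>\<in>{\<sigma>. \<sigma> permutes {..<length (pos_entries n d)}}.
              sb_perm_prob (pos_entries n d) \<sigma>
                * (if m \<le> length (pos_entries n d)
                   then f (map (\<lambda>i. int (pos_entries n d ! \<sigma> i)) [0..<m]) else 0))"

definition Rk :: "nat pmf \<Rightarrow> nat \<Rightarrow> nat \<Rightarrow> (nat \<Rightarrow> nat) \<Rightarrow> real" where
  "Rk \<mu> n m k = (if (\<Sum>i<m. k i) \<le> n - 1 then (\<Prod>i<m. pmf \<mu> (k i)) *
         measure_pmf.prob (iid {m..<n} \<mu>) {x. (\<Sum>i\<in>{m..<n}. x i) = n - 1 - (\<Sum>i<m. k i)} else 0)"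

lemma Lr_eq:
  assumes "d \<in> DSet n"
  shows "Lr n m f d = (\<Sum>ix\<in>dl m {..<n}. Phi n m (kd m ix d) * f (fk m (kd m ix d)))"
proof -
  have s: "(\<Sum>i<n. d i) = n - 1" using assms by (simp add: DSet_def)
  show ?thesis
    unfolding Lr_def integrand_eq s
    by (rule sum.cong[OF refl]) (rule Wl_kd)
qed

lemma inner_sum:
  fixes \<mu> :: "nat pmf" and Z :: real
  assumes ix: "ix \<in> dl m {..<n}"
  shows "(\<Sum>d\<in>DSet n. pmf (iid {..<n} \<mu>) d / Z * (Phi n m (kd m ix d) * f (fk m (kd m ix d))))
       = (\<Sum>k\<in>KSet n m. Phi n m k * f (fk m k) / Z * Rk \<mu> n m k)"
proof -
  define P where "P = iid {..<n} \<mu>"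
  have "(\<Sum>d\<in>DSet n. pmf P d / Z * (Phi n m (kd m ix d) * f (fk m (kd m ix d))))
      = (\<Sum>k\<in>KSet n m. \<Sum>d\<in>{d \<in> DSet n. kd m ix d = k}. pmf P d / Z * (Phi n m (kd m ix d) * f (fk m (kd m ix d))))"
    by (rule sum.group[where S="DSet n" and T="KSet n m" and g="kd m ix", symmetric])
       (use finite_DSet finite_KSet kd_in_KSet[OF _ ix] in blast)+
  also have "\<dots> = (\<Sum>k\<in>KSet n m. Phi n m k * f (fk m k) / Z * Rk \<mu> n m k)"
  proof (rule sum.cong[OF refl])
    fix k assume k: "k \<in> KSet n m"
    have "(\<Sum>d\<in>{d \<in> DSet n. kd m ix d = k}. pmf P d / Z * (Phi n m (kd m ix d) * f (fk m (kd m ix d))))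
        = (\<Sum>d\<in>{d \<in> DSet n. kd m ix d = k}. pmf P d) * (Phi n m k * f (fk m k) / Z)"
    proof -
      have "(\<Sum>d\<in>{d \<in> DSet n. kd m ix d = k}. pmf P d / Z * (Phi n m (kd m ix d) * f (fk m (kd m ix d))))
          = (\<Sum>d\<in>{d \<in> DSet n. kd m ix d = k}. pmf P d * (Phi n m k * f (fk m k) / Z))"
      proof (rule sum.cong[OF refl])
        fix d assume "d \<in> {d \<in> DSet n. kd m ix d = k}"
        then have "kd m ix d = k" by simp
        then show "pmf P d / Z * (Phi n m (kd m ix d) * f (fk m (kd m ix d))) = pmf P d * (Phi n m k * f (fk m k) / Z)"
          by simp
      qed
      also have "\<dots> = (\<Sum>d\<in>{d \<in> DSet n. kd m ix d = k}. pmf P d) * (Phi n m k * f (fk m k) / Z)"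
        by (rule sum_distrib_right[symmetric])
      finally show ?thesis .
    qed
    also have "(\<Sum>d\<in>{d \<in> DSet n. kd m ix d = k}. pmf P d) = measure_pmf.prob P {d \<in> DSet n. kd m ix d = k}"
      by (rule measure_measure_pmf_finite[symmetric]) (use finite_DSet in auto)
    also have "\<dots> = measure_pmf.prob P {d. (\<forall>i<m. d (ix ! i) = k i) \<and> (\<Sum>i<n. d i) = n - 1}"
    proof -
      have sp: "set_pmf P \<subseteq> {f. \<forall>x. x \<notin> {..<n} \<longrightarrow> f x = 0}"
        unfolding P_def iid_def by (rule set_Pi_pmf_subset) simp
      have k0: "k i = 0" if "\<not> i < m" for i using k that by (auto simp: KSet_def PiE_dflt_def)
      have "{d \<in> DSet n. kd m ix d = k} \<inter> set_pmf P = {d. (\<forall>i<m. d (ix ! i) = k i) \<and> (\<Sum>i<n. d i) = n - 1} \<inter> set_pmf P"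
      proof (rule set_eqI)
        fix d
        show "d \<in> {d \<in> DSet n. kd m ix d = k} \<inter> set_pmf P \<longleftrightarrow> d \<in> {d. (\<forall>i<m. d (ix ! i) = k i) \<and> (\<Sum>i<n. d i) = n - 1} \<inter> set_pmf P"
        proof
          assume b: "d \<in> {d \<in> DSet n. kd m ix d = k} \<inter> set_pmf P"
          then have dD: "d \<in> DSet n" and kk: "kd m ix d = k" and dP: "d \<in> set_pmf P" by auto
          have "\<forall>i<m. d (ix ! i) = k i"
          proof (intro allI impI)
            fix i assume "i < m"
            then show "d (ix ! i) = k i" using fun_cong[OF kk, of i] by (simp add: kd_def)
          qed
          moreover have "(\<Sum>i<n. d i) = n - 1" using dD by (simp add: DSet_def)
          ultimately show "d \<in> {d. (\<forall>i<m. d (ix ! i) = k i) \<and> (\<Sum>i<n. d i) = n - 1} \<inter> set_pmf P"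
            using dP by blast
        next
          assume a: "d \<in> {d. (\<forall>i<m. d (ix ! i) = k i) \<and> (\<Sum>i<n. d i) = n - 1} \<inter> set_pmf P"
          then have z: "\<And>x. x \<notin> {..<n} \<Longrightarrow> d x = 0" using sp by auto
          have "d i \<le> n - 1" if "i < n" for i using le_sum_nat[OF that, of d] a by auto
          then have "d \<in> DSet n" using a z by (auto simp: DSet_def PiE_dflt_def)
          moreover have "kd m ix d = k"
          proof (rule ext)
            fix i show "kd m ix d i = k i" using a k0[of i] by (simp add: kd_def)
          qed
          ultimately show "d \<in> {d \<in> DSet n. kd m ix d = k} \<inter> set_pmf P" using a by auto
        qed
      qed
      then have "measure_pmf.prob P ({d \<in> DSet n. kd m ix d = k} \<inter> set_pmf P)
        = measure_pmf.prob P ({d. (\<forall>i<m. d (ix ! i) = k i) \<and> (\<Sum>i<n. d i) = n - 1} \<inter> set_pmf P)"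
        by (rule arg_cong)
      then show ?thesis by (simp only: measure_Int_set_pmf)
    qed
    also have "\<dots> = Rk \<mu> n m k"
      unfolding P_def Rk_def by (rule prob_event[OF ix])
    finally show "(\<Sum>d\<in>{d \<in> DSet n. kd m ix d = k}. pmf P d / Z * (Phi n m (kd m ix d) * f (fk m (kd m ix d))))
        = Phi n m k * f (fk m k) / Z * Rk \<mu> n m k" by (simp only: mult.commute)
  qed
  finally show ?thesis by (simp add: P_def)
qed

lemma termwise:
  fixes \<mu> :: "nat pmf" and Z :: real
  assumes Z: "Z = measure_pmf.prob (iid {..<n} \<mu>) {x. (\<Sum>i<n. x i) = n - 1}"
  shows "real (\<Prod>i<m. n - i) * (Phi n m k * f (fk m k) / Z * Rk \<mu> n m k)
       = f (fk m k) * Theta \<mu> n m k * (\<Prod>i<m. real (k i) * pmf \<mu> (k i))"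
proof (cases "(\<Sum>i<m. k i) \<le> n - 1")
  case False
  then show ?thesis by (simp add: Rk_def Theta_def)
next
  case True
  define Q where "Q = measure_pmf.prob (iid {m..<n} \<mu>) {x. (\<Sum>i\<in>{m..<n}. x i) = n - 1 - (\<Sum>i<m. k i)}"
  define den where "den = (\<lambda>i. real (n - 1 - (\<Sum>j<i. k j)))"
  have Th: "Theta \<mu> n m k = Q / Z * (\<Prod>i<m. real (n - i) / den i)"
    using True by (simp add: Theta_def Q_def den_def Z)
  have R: "Rk \<mu> n m k = (\<Prod>i<m. pmf \<mu> (k i)) * Q"
    using True by (simp add: Rk_def Q_def)
  have Ph: "Phi n m k = (\<Prod>i<m. real (k i) / den i)" by (simp add: Phi_def den_def)
  have X: "(\<Prod>i<m. real (n - i) / den i) * (\<Prod>i<m. real (k i) * pmf \<mu> (k i))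
      = (\<Prod>i<m. real (n - i)) * (\<Prod>i<m. real (k i) / den i) * (\<Prod>i<m. pmf \<mu> (k i))"
    by (simp only: prod.distrib[symmetric]) (rule prod.cong; simp)
  have "f (fk m k) * Theta \<mu> n m k * (\<Prod>i<m. real (k i) * pmf \<mu> (k i))
      = f (fk m k) * Q / Z * ((\<Prod>i<m. real (n - i) / den i) * (\<Prod>i<m. real (k i) * pmf \<mu> (k i)))"
    by (simp add: Th)
  also have "\<dots> = f (fk m k) * Q / Z * ((\<Prod>i<m. real (n - i)) * (\<Prod>i<m. real (k i) / den i) * (\<Prod>i<m. pmf \<mu> (k i)))"
    by (simp only: X)
  also have "\<dots> = real (\<Prod>i<m. n - i) * (Phi n m k * f (fk m k) / Z * Rk \<mu> n m k)"
    by (simp add: Ph R)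
  finally show ?thesis by simp
qed

lemma main_real:
  fixes \<mu> :: "nat pmf" and n m :: nat and f :: "int list \<Rightarrow> real" and Z :: real
  assumes Z: "Z = measure_pmf.prob (iid {..<n} \<mu>) {x. (\<Sum>i<n. x i) = n - 1}"
  shows "(\<Sum>d\<in>DSet n. Lr n m f d * (pmf (iid {..<n} \<mu>) d / Z))
       = (\<Sum>k\<in>KSet n m. f (fk m k) * Theta \<mu> n m k * (\<Prod>i<m. real (k i) * pmf \<mu> (k i)))"
proof -
  define P where "P = iid {..<n} \<mu>"
  define H where "H = (\<lambda>k. Phi n m k * f (fk m k))"
  have "(\<Sum>d\<in>DSet n. Lr n m f d * (pmf P d / Z))
      = (\<Sum>d\<in>DSet n. \<Sum>ix\<in>dl m {..<n}. pmf P d / Z * H (kd m ix d))"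
  proof (rule sum.cong[OF refl])
    fix d assume "d \<in> DSet n"
    then show "Lr n m f d * (pmf P d / Z) = (\<Sum>ix\<in>dl m {..<n}. pmf P d / Z * H (kd m ix d))"
      by (simp add: Lr_eq H_def sum_distrib_left mult.commute)
  qed
  also have "\<dots> = (\<Sum>ix\<in>dl m {..<n}. \<Sum>d\<in>DSet n. pmf P d / Z * H (kd m ix d))"
    by (rule sum.swap)
  also have "\<dots> = (\<Sum>ix\<in>dl m {..<n}. \<Sum>k\<in>KSet n m. H k / Z * Rk \<mu> n m k)"
  proof (rule sum.cong[OF refl])
    fix ix assume "ix \<in> dl m {..<n}"
    then show "(\<Sum>d\<in>DSet n. pmf P d / Z * H (kd m ix d)) = (\<Sum>k\<in>KSet n m. H k / Z * Rk \<mu> n m k)"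
      using inner_sum[of ix m n \<mu> Z f] by (simp add: H_def P_def)
  qed
  also have "\<dots> = real (card (dl m {..<n})) * (\<Sum>k\<in>KSet n m. H k / Z * Rk \<mu> n m k)"
    by simp
  also have "card (dl m {..<n}) = (\<Prod>i<m. n - i)" by (simp add: card_dl)
  also have "real (\<Prod>i<m. n - i) * (\<Sum>k\<in>KSet n m. H k / Z * Rk \<mu> n m k)
      = (\<Sum>k\<in>KSet n m. f (fk m k) * Theta \<mu> n m k * (\<Prod>i<m. real (k i) * pmf \<mu> (k i)))"
    unfolding sum_distrib_left H_def
    by (rule sum.cong[OF refl]) (rule termwise[OF Z])
  finally show ?thesis by (simp add: P_def)
qed



lemma pmf_size_biased:
  assumes crit: "critical \<mu>"
  shows "pmf (size_biased \<mu>) x = real x * pmf \<mu> x"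
proof -
  have "(\<integral>\<^sup>+ x. ennreal (real x * pmf \<mu> x) \<partial>count_space UNIV)
      = (\<integral>\<^sup>+ x. ennreal (pmf \<mu> x) * ennreal (real x) \<partial>count_space UNIV)"
    by (rule nn_integral_cong) (simp add: ennreal_mult mult.commute)
  also have "\<dots> = (\<integral>\<^sup>+ k. ennreal (real k) \<partial>measure_pmf \<mu>)"
    by (rule nn_integral_measure_pmf[symmetric])
  also have "\<dots> = 1" using crit by (simp add: critical_def)
  finally have "(\<integral>\<^sup>+ x. ennreal (real x * pmf \<mu> x) \<partial>count_space UNIV) = 1" .
  then show ?thesis unfolding size_biased_def
    by (subst pmf_embed_pmf) auto
qed

lemma sb_perm_prob_nonneg: "sb_perm_prob ks \<sigma> \<ge> 0"
  unfolding sb_perm_prob_def by (intro prod_nonneg divide_nonneg_nonneg sum_nonneg) auto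

lemma Theta_nonneg: "Theta \<mu> n m k \<ge> 0"
  unfolding Theta_def by (auto intro!: mult_nonneg_nonneg divide_nonneg_nonneg prod_nonneg)

theorem proposition4p3:
  fixes \<mu> :: "nat pmf" and n m :: nat and f :: "int list \<Rightarrow> real"
  assumes crit: "critical \<mu>"
    and gcd1: "aperiodic_support \<mu>"
    and wd: "measure_pmf.prob (iid {..<n} \<mu>) {x. (\<Sum>i<n. x i) = n - 1} > 0"
    and m1: "1 \<le> m" and mn: "m < n"
    and fnn: "\<And>x. f x \<ge> 0"
  shows "(\<integral>\<^sup>+ d. (\<Sum>\<sigma>\<in>{\<sigma>. \<sigma> permutes {..<length (pos_entries n d)}}.
              ennreal (sb_perm_prob (pos_entries n d) \<sigma>
                * (if m \<le> length (pos_entries n d)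
                   then f (map (\<lambda>i. int (pos_entries n d ! \<sigma> i)) [0..<m]) else 0)))
           \<partial>measure_pmf (Dn_law \<mu> n))
       = (\<integral>\<^sup>+ k. ennreal (f (map (\<lambda>i. int (k i)) [0..<m]) * Theta \<mu> n m k)
           \<partial>measure_pmf (iid {..<m} (size_biased \<mu>)))"
proof -
  define P where "P = iid {..<n} \<mu>"
  define As where "As = {x::nat\<Rightarrow>nat. (\<Sum>i<n. x i) = n - 1}"
  define Z where "Z = measure_pmf.prob P As"
  have Zpos: "Z > 0" using wd by (simp add: Z_def P_def As_def)
  have ne: "set_pmf P \<inter> As \<noteq> {}"
  proof
    assume "set_pmf P \<inter> As = {}"
    then have "measure_pmf.prob P (As \<inter> set_pmf P) = 0" by (simp add: Int_commute)
    then show False using Zpos by (simp add: measure_Int_set_pmf Z_def)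
  qed
  have Dn: "Dn_law \<mu> n = cond_pmf P As" by (simp add: Dn_law_def P_def As_def)
  have sp: "set_pmf P \<subseteq> {f. \<forall>x. x \<notin> {..<n} \<longrightarrow> f x = 0}"
    unfolding P_def iid_def by (rule set_Pi_pmf_subset) simp
  have sD: "set_pmf (Dn_law \<mu> n) \<subseteq> DSet n"
  proof
    fix d assume "d \<in> set_pmf (Dn_law \<mu> n)"
    then have d: "d \<in> set_pmf P" "d \<in> As" using set_cond_pmf[OF ne] Dn by auto
    then have z: "\<And>x. x \<notin> {..<n} \<Longrightarrow> d x = 0" using sp by auto
    have "d i \<le> n - 1" if "i < n" for i using le_sum_nat[OF that, of d] d by (auto simp: As_def)
    then show "d \<in> DSet n" using d z by (auto simp: DSet_def PiE_dflt_def As_def)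
  qed
  have pD: "pmf (Dn_law \<mu> n) d = pmf P d / Z" if "d \<in> DSet n" for d
    using that pmf_cond[OF ne, of d] Dn by (simp add: DSet_def As_def Z_def)
  have Lr_nn: "0 \<le> Lr n m f d" for d
    unfolding Lr_def by (intro sum_nonneg mult_nonneg_nonneg) (auto simp: sb_perm_prob_nonneg fnn)
  have "(\<integral>\<^sup>+ d. (\<Sum>\<sigma>\<in>{\<sigma>. \<sigma> permutes {..<length (pos_entries n d)}}.
              ennreal (sb_perm_prob (pos_entries n d) \<sigma>
                * (if m \<le> length (pos_entries n d)
                   then f (map (\<lambda>i. int (pos_entries n d ! \<sigma> i)) [0..<m]) else 0)))
           \<partial>measure_pmf (Dn_law \<mu> n))
      = (\<integral>\<^sup>+ d. ennreal (Lr n m f d) \<partial>measure_pmf (Dn_law \<mu> n))"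
    unfolding Lr_def
    by (rule nn_integral_cong, rule sum_ennreal) (auto intro!: mult_nonneg_nonneg simp: sb_perm_prob_nonneg fnn)
  also have "\<dots> = (\<Sum>d\<in>DSet n. ennreal (Lr n m f d) * pmf (Dn_law \<mu> n) d)"
    by (rule nn_integral_measure_pmf_support[OF finite_DSet]) (use sD in auto)
  also have "\<dots> = (\<Sum>d\<in>DSet n. ennreal (Lr n m f d * (pmf P d / Z)))"
  proof (rule sum.cong[OF refl])
    fix d assume "d \<in> DSet n"
    then show "ennreal (Lr n m f d) * ennreal (pmf (Dn_law \<mu> n) d) = ennreal (Lr n m f d * (pmf P d / Z))"
      by (simp add: pD ennreal_mult'[symmetric] Lr_nn)
  qed
  also have "\<dots> = ennreal (\<Sum>d\<in>DSet n. Lr n m f d * (pmf P d / Z))"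
    by (rule sum_ennreal) (simp add: Lr_nn Zpos less_imp_le)
  also have "(\<Sum>d\<in>DSet n. Lr n m f d * (pmf P d / Z))
       = (\<Sum>k\<in>KSet n m. f (fk m k) * Theta \<mu> n m k * (\<Prod>i<m. real (k i) * pmf \<mu> (k i)))"
    unfolding P_def by (rule main_real) (simp add: Z_def P_def As_def)
  also have "ennreal \<dots> = (\<Sum>k\<in>KSet n m. ennreal (f (fk m k) * Theta \<mu> n m k) * pmf (iid {..<m} (size_biased \<mu>)) k)"
  proof -
    have pQ: "pmf (iid {..<m} (size_biased \<mu>)) k = (\<Prod>i<m. real (k i) * pmf \<mu> (k i))" if "k \<in> KSet n m" for k
      using that by (simp add: iid_def pmf_Pi KSet_def PiE_dflt_def pmf_size_biased[OF crit])
    have "ennreal (\<Sum>k\<in>KSet n m. f (fk m k) * Theta \<mu> n m k * (\<Prod>i<m. real (k i) * pmf \<mu> (k i)))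
        = (\<Sum>k\<in>KSet n m. ennreal (f (fk m k) * Theta \<mu> n m k * (\<Prod>i<m. real (k i) * pmf \<mu> (k i))))"
      by (rule sum_ennreal[symmetric]) (intro mult_nonneg_nonneg prod_nonneg fnn Theta_nonneg; simp)
    also have "\<dots> = (\<Sum>k\<in>KSet n m. ennreal (f (fk m k) * Theta \<mu> n m k) * pmf (iid {..<m} (size_biased \<mu>)) k)"
    proof (rule sum.cong[OF refl])
      fix k assume k: "k \<in> KSet n m"
      have "0 \<le> f (fk m k) * Theta \<mu> n m k" by (intro mult_nonneg_nonneg fnn Theta_nonneg)
      then show "ennreal (f (fk m k) * Theta \<mu> n m k * (\<Prod>i<m. real (k i) * pmf \<mu> (k i)))
          = ennreal (f (fk m k) * Theta \<mu> n m k) * pmf (iid {..<m} (size_biased \<mu>)) k"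
        by (simp add: pQ[OF k] ennreal_mult')
    qed
    finally show ?thesis .
  qed
  also have "\<dots> = (\<integral>\<^sup>+ k. ennreal (f (fk m k) * Theta \<mu> n m k)
           \<partial>measure_pmf (iid {..<m} (size_biased \<mu>)))"
  proof (rule nn_integral_measure_pmf_support[OF finite_KSet, symmetric])
    fix k assume k: "k \<in> set_pmf (iid {..<m} (size_biased \<mu>))" "k \<notin> KSet n m"
    have z: "\<And>x. x \<notin> {..<m} \<Longrightarrow> k x = 0"
      using set_Pi_pmf_subset[of "{..<m}" 0 "\<lambda>_. size_biased \<mu>"] k(1) by (auto simp: iid_def)
    then obtain i where i: "i < m" "k i > n - 1" using k(2) by (force simp: KSet_def PiE_dflt_def)
    then have "\<not> (\<Sum>i<m. k i) \<le> n - 1" using le_sum_nat[OF i(1), of k] by linarith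
    then show "ennreal (f (fk m k) * Theta \<mu> n m k) = 0" by (simp add: Theta_def)
  qed simp
  finally show ?thesis by (simp only: fk_def)
qed


end
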